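(* Let $n>1$ be an odd integer with prime decomposition $n=p_1^{n_1}\cdots p_m^{n_m}$, let $A$ be a finite abelian group, and let $G$ be a group containing $A$ as a normal subgroup with $G/A\cong\mathbb{Z}_n$. If $[e]_\varphi$ is a subgroup of $G$ for every $\varphi\in{\rm Aut}\,G$, then $G$ is nilpotent of nilpotency class at most $\max\{n_1,\dots,n_m\}+1$.
   Context: For an automorphism $\varphi$ of $G$, $[e]_\varphi=\{z^{-1}\varphi(z)\mid z\in G\}$. A group has nilpotency class at most $c$ if $\gamma_{c+1}(G)=\{e\}$, where $\gamma_1(G)=G$, $\gamma_{k+1}(G)=[\gamma_k(G),G]$. *)

theory Defs
  imports "HOL-Algebra.Algebra" "HOL-Computational_Algebra.Primes"
begin

definition commutator_subgroup :: "('a, 'b) monoid_scheme \<Rightarrow> 'a set \<Rightarrow> 'a set \<Rightarrow> 'a set" where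
  "commutator_subgroup G H K =
     generate G {inv\<^bsub>G\<^esub> x \<otimes>\<^bsub>G\<^esub> inv\<^bsub>G\<^esub> y \<otimes>\<^bsub>G\<^esub> x \<otimes>\<^bsub>G\<^esub> y | x y. x \<in> H \<and> y \<in> K}"

text \<open>Lower central series, shifted by one: lower_central G k is gamma_(k+1)(G).\<close>
primrec lower_central :: "('a, 'b) monoid_scheme \<Rightarrow> nat \<Rightarrow> 'a set" where
  "lower_central G 0 = carrier G"
| "lower_central G (Suc k) = commutator_subgroup G (lower_central G k) (carrier G)"

definition nilpotent_class_le :: "('a, 'b) monoid_scheme \<Rightarrow> nat \<Rightarrow> bool" where
  "nilpotent_class_le G c \<longleftrightarrow> lower_central G c = {\<one>\<^bsub>G\<^esub>}"

definition twisted_class :: "('a, 'b) monoid_scheme \<Rightarrow> ('a \<Rightarrow> 'a) \<Rightarrow> 'a set" where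
  "twisted_class G \<phi> = {inv\<^bsub>G\<^esub> z \<otimes>\<^bsub>G\<^esub> \<phi> z | z. z \<in> carrier G}"

end

theory Submission
  imports Defs
begin


lemma funpow_maps:
  assumes "\<sigma> ` Sx \<subseteq> Sx" shows "(\<sigma>^^i) ` Sx \<subseteq> Sx"
  using assms by (induction i) auto

lemma funpow_inj_on:
  assumes "\<sigma> ` Sx \<subseteq> Sx" "inj_on \<sigma> Sx" shows "inj_on (\<sigma>^^i) Sx"
proof (induction i)
  case (Suc i)
  have "inj_on (\<sigma> \<circ> (\<sigma>^^i)) Sx"
    using Suc funpow_maps[OF assms(1), of i] assms(2)
    by (meson comp_inj_on inj_on_subset)
  then show ?case by (simp add: comp_def)
qed simp

lemma funpow_period:
  assumes "(\<sigma>^^r) x = x" shows "(\<sigma>^^(r*q)) x = x"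
proof (induction q)
  case (Suc q)
  have "(\<sigma>^^(r*Suc q)) x = (\<sigma>^^(r + r*q)) x" by simp
  also have "\<dots> = (\<sigma>^^r) ((\<sigma>^^(r*q)) x)" by (simp add: funpow_add)
  finally have "(\<sigma>^^(r*Suc q)) x = (\<sigma>^^r) ((\<sigma>^^(r*q)) x)" .
  then show ?case using Suc assms by simp
qed simp

lemma fixpoint_mod:
  fixes \<sigma> :: "'a \<Rightarrow> 'a"
  assumes "Factorial_Ring.prime p"
  shows "finite Sx \<Longrightarrow> \<sigma> ` Sx \<subseteq> Sx \<Longrightarrow> inj_on \<sigma> Sx \<Longrightarrow> (\<forall>x\<in>Sx. (\<sigma>^^(p^t)) x = x) \<Longrightarrow>
    card Sx mod p = card {x\<in>Sx. \<sigma> x = x} mod p"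
proof (induction "card Sx" arbitrary: Sx rule: less_induct)
  case less
  show ?case
  proof (cases "Sx = {}")
    case True then show ?thesis by simp
  next
    case False
    then obtain x where x: "x \<in> Sx" by blast
    show ?thesis
    proof (cases "\<sigma> x = x")
      case True
      define Sx' where "Sx' = Sx - {x}"
      have "\<sigma> ` Sx' \<subseteq> Sx'"
      proof
        fix z assume "z \<in> \<sigma> ` Sx'"
        then obtain y where y: "y \<in> Sx'" "z = \<sigma> y" by blast
        have "\<sigma> y \<noteq> x" using y True less.prems(3) x unfolding Sx'_def
          by (metis DiffD1 DiffD2 inj_on_eq_iff singletonI)
        then show "z \<in> Sx'" using y less.prems(2) unfolding Sx'_def by auto
      qed
      moreover have "inj_on \<sigma> Sx'" using less.prems(3) unfolding Sx'_def by (rule inj_on_subset) auto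
      moreover have "finite Sx'" using less.prems(1) unfolding Sx'_def by simp
      moreover have "card Sx' < card Sx"
      proof -
        have "card Sx > 0" using less.prems(1) x card_gt_0_iff by blast
        then show ?thesis using less.prems(1) x unfolding Sx'_def by simp
      qed
      moreover have "\<forall>z\<in>Sx'. (\<sigma>^^(p^t)) z = z" using less.prems(4) unfolding Sx'_def by blast
      ultimately have IH: "card Sx' mod p = card {x\<in>Sx'. \<sigma> x = x} mod p"
        using less.hyps by blast
      have c1: "card Sx = Suc (card Sx')"
      proof -
        have "card Sx > 0" using less.prems(1) x card_gt_0_iff by blast
        then show ?thesis using less.prems(1) x unfolding Sx'_def by simp
      qed
      have "{z\<in>Sx. \<sigma> z = z} = insert x {z\<in>Sx'. \<sigma> z = z}" using x True unfolding Sx'_def by auto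
      moreover have "x \<notin> {z\<in>Sx'. \<sigma> z = z}" unfolding Sx'_def by auto
      ultimately have c2: "card {z\<in>Sx. \<sigma> z = z} = Suc (card {z\<in>Sx'. \<sigma> z = z})"
        using \<open>finite Sx'\<close> by simp
      show ?thesis using IH c1 c2 by (metis mod_Suc_eq)
    next
      case False
      have ex: "\<exists>i. 0 < i \<and> (\<sigma>^^i) x = x"
        using less.prems(4) x by (intro exI[of _ "p^t"]) (simp add: prime_gt_0_nat[OF assms])
      define r where "r = (LEAST i. 0 < i \<and> (\<sigma>^^i) x = x)"
      have r: "0 < r" "(\<sigma>^^r) x = x" using LeastI_ex[OF ex] unfolding r_def by auto
      have rmin: "\<not> (\<sigma>^^i) x = x" if "0 < i" "i < r" for i
        using not_less_Least[of i "\<lambda>i. 0 < i \<and> (\<sigma>^^i) x = x"] that unfolding r_def by auto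
      have orbX: "(\<sigma>^^i) x \<in> Sx" for i using funpow_maps[OF less.prems(2), of i] x by auto
      have injk: "inj_on (\<sigma>^^i) Sx" for i using funpow_inj_on[OF less.prems(2,3)] .
      define Orb where "Orb = (\<lambda>i. (\<sigma>^^i) x) ` {0..<r}"
      have injO: "inj_on (\<lambda>i. (\<sigma>^^i) x) {0..<r}"
      proof (rule inj_onI)
        fix i j assume ij: "i \<in> {0..<r}" "j \<in> {0..<r}" "(\<sigma>^^i) x = (\<sigma>^^j) x"
        show "i = j"
        proof (rule ccontr)
          assume "i \<noteq> j"
          then consider "i < j" | "j < i" by linarith
          then show False
          proof cases
            case 1
            have e: "(\<sigma>^^(i + (j-i))) x = (\<sigma>^^i) ((\<sigma>^^(j-i)) x)" by (simp only: funpow_add comp_apply)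
            have "i + (j-i) = j" using 1 by simp
            then have "(\<sigma>^^i) ((\<sigma>^^(j-i)) x) = (\<sigma>^^i) x" using e ij(3) by simp
            then have "(\<sigma>^^(j-i)) x = x" using injk[of i] orbX x by (meson inj_onD)
            moreover have "0 < j-i" "j-i < r" using 1 ij by auto
            ultimately show False using rmin by blast
          next
            case 2
            have e: "(\<sigma>^^(j + (i-j))) x = (\<sigma>^^j) ((\<sigma>^^(i-j)) x)" by (simp only: funpow_add comp_apply)
            have "j + (i-j) = i" using 2 by simp
            then have "(\<sigma>^^j) ((\<sigma>^^(i-j)) x) = (\<sigma>^^j) x" using e ij(3) by simp
            then have "(\<sigma>^^(i-j)) x = x" using injk[of j] orbX x by (meson inj_onD)
            moreover have "0 < i-j" "i-j < r" using 2 ij by auto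
            ultimately show False using rmin by blast
          qed
        qed
      qed
      have cardO: "card Orb = r" unfolding Orb_def using injO by (simp add: card_image)
      have rdvd: "r dvd p^t"
      proof -
        define q where "q = p^t div r"
        define s where "s = p^t mod r"
        have qs: "p^t = r*q + s" "s < r" using r(1) unfolding q_def s_def by simp_all
        have e: "(\<sigma>^^(s + r*q)) x = (\<sigma>^^s) ((\<sigma>^^(r*q)) x)" by (simp only: funpow_add comp_apply)
        have "(\<sigma>^^(p^t)) x = (\<sigma>^^s) ((\<sigma>^^(r*q)) x)"
          using qs(1) e by (simp add: add.commute)
        then have "(\<sigma>^^s) x = x" using funpow_period[OF r(2)] less.prems(4) x by simp
        then have "s = 0" using rmin qs(2) by blast
        then show ?thesis using qs by simp
      qed
      have "r \<noteq> 1" using r(2) False by auto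
      obtain k where k0: "r = p^k" using rdvd assms divides_primepow_nat by blast
      with \<open>r \<noteq> 1\<close> have k: "r = p^k" "k \<ge> 1" by (auto simp: Suc_le_eq)
      then have pr: "p dvd card Orb" using cardO by simp
      have OX: "Orb \<subseteq> Sx" unfolding Orb_def using orbX by auto
      define Sx' where "Sx' = Sx - Orb"
      have sigO: "\<sigma> ((\<sigma>^^i) x) = (\<sigma>^^(Suc i)) x" for i by simp
      have "\<sigma> ` Sx' \<subseteq> Sx'"
      proof
        fix z assume "z \<in> \<sigma> ` Sx'"
        then obtain y where y: "y \<in> Sx'" "z = \<sigma> y" by blast
        have "\<sigma> y \<notin> Orb"
        proof
          assume "\<sigma> y \<in> Orb"
          then obtain i where i: "i < r" "\<sigma> y = (\<sigma>^^i) x" unfolding Orb_def by auto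
          obtain j where j: "j < r" "(\<sigma>^^i) x = \<sigma> ((\<sigma>^^j) x)"
          proof (cases i)
            case 0
            have rr: "Suc (r - 1) = r" using r(1) by simp
            have "(\<sigma>^^(Suc (r-1))) x = \<sigma> ((\<sigma>^^(r-1)) x)" by simp
            then have "(\<sigma>^^i) x = \<sigma> ((\<sigma>^^(r-1)) x)" using rr r(2) 0 by simp
            then show ?thesis using that[of "r - 1"] r(1) by simp
          next
            case (Suc j) then show ?thesis using that[of j] i by simp
          qed
          then have "y = (\<sigma>^^j) x" using i less.prems(3) y orbX unfolding Sx'_def
            by (metis DiffD1 inj_on_eq_iff)
          then show False using y j unfolding Sx'_def Orb_def by auto
        qed
        then show "z \<in> Sx'" using y less.prems(2) unfolding Sx'_def by auto
      qed
      moreover have "inj_on \<sigma> Sx'" using less.prems(3) unfolding Sx'_def by (rule inj_on_subset) auto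
      moreover have "finite Sx'" using less.prems(1) unfolding Sx'_def by simp
      moreover have "card Sx' < card Sx"
      proof -
        have "Orb \<noteq> {}" using cardO r(1) by auto
        then have "Sx' \<subset> Sx" using OX unfolding Sx'_def by auto
        then show ?thesis by (rule psubset_card_mono[OF less.prems(1)])
      qed
      moreover have "\<forall>z\<in>Sx'. (\<sigma>^^(p^t)) z = z" using less.prems(4) unfolding Sx'_def by blast
      ultimately have IH: "card Sx' mod p = card {x\<in>Sx'. \<sigma> x = x} mod p"
        using less.hyps by blast
      have nofix: "\<sigma> z \<noteq> z" if zO: "z \<in> Orb" for z
      proof
        assume fz: "\<sigma> z = z"
        obtain i where i: "z = (\<sigma>^^i) x" using zO unfolding Orb_def by auto
        have "(\<sigma>^^i) (\<sigma> x) = (\<sigma>^^i) x" using fz i by (simp add: funpow_swap1)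
        then have "\<sigma> x = x" using injk[of i] x less.prems(2) by (meson image_subset_iff inj_onD)
        then show False using False by simp
      qed
      have "{z\<in>Sx. \<sigma> z = z} = {z\<in>Sx'. \<sigma> z = z}" using nofix unfolding Sx'_def by auto
      moreover have "card Sx = card Sx' + card Orb"
      proof -
        have "finite Orb" using finite_subset[OF OX less.prems(1)] .
        then have "card Sx' = card Sx - card Orb" unfolding Sx'_def using card_Diff_subset OX by blast
        moreover have "card Orb \<le> card Sx" using card_mono[OF less.prems(1) OX] .
        ultimately show ?thesis by simp
      qed
      moreover obtain c where "card Orb = p * c" using pr by blast
      ultimately show ?thesis using IH by simp
    qed
  qed
qed


locale nilsetup = group G for G (structure) +
  fixes A :: "'a set" and g :: 'a and n :: nat
  assumes AG: "A \<lhd> G"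
    and comm: "\<And>x y. x \<in> A \<Longrightarrow> y \<in> A \<Longrightarrow> x \<otimes> y = y \<otimes> x"
    and finA: "finite A"
    and gG: "g \<in> carrier G"
    and gen: "\<And>x. x \<in> carrier G \<Longrightarrow> \<exists>a\<in>A. \<exists>i::nat. x = a \<otimes> g [^] i"
    and gn: "g [^] n \<in> A"
    and npos: "n > 0"
begin

lemma subA: "subgroup A G" using AG by (rule normal_imp_subgroup)
lemma AC: "x \<in> A \<Longrightarrow> x \<in> carrier G" by (rule subgroup.mem_carrier[OF subA])

lemma canc1[simp]: "x \<in> carrier G \<Longrightarrow> y \<in> carrier G \<Longrightarrow> x \<otimes> (inv x \<otimes> y) = y"
  by (simp add: m_assoc[symmetric])
lemma canc2[simp]: "x \<in> carrier G \<Longrightarrow> y \<in> carrier G \<Longrightarrow> inv x \<otimes> (x \<otimes> y) = y"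
  by (simp add: m_assoc[symmetric])

definition T :: "nat \<Rightarrow> 'a \<Rightarrow> 'a" where
  "T i x = inv (g [^] i) \<otimes> x \<otimes> g [^] i"

lemma T_carrier[simp]: "x \<in> carrier G \<Longrightarrow> T i x \<in> carrier G"
  unfolding T_def using gG by simp

lemma T_A: "x \<in> A \<Longrightarrow> T i x \<in> A"
  unfolding T_def using gG normal.inv_op_closed1[OF AG] by simp

lemma T_mult: "x \<in> carrier G \<Longrightarrow> y \<in> carrier G \<Longrightarrow> T i (x \<otimes> y) = T i x \<otimes> T i y"
  unfolding T_def using gG by (simp add: m_assoc)

lemma T_one[simp]: "T i \<one> = \<one>"
  unfolding T_def using gG by simp

lemma T_inv: "x \<in> carrier G \<Longrightarrow> T i (inv x) = inv (T i x)"
  unfolding T_def using gG by (simp add: inv_mult_group m_assoc)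

lemma T_0[simp]: "x \<in> carrier G \<Longrightarrow> T 0 x = x"
  unfolding T_def by simp

lemma T_add: "x \<in> carrier G \<Longrightarrow> T (i + j) x = T j (T i x)"
proof -
  assume x: "x \<in> carrier G"
  have e: "g [^] (i + j) = g [^] i \<otimes> g [^] j" using gG by (simp add: nat_pow_mult)
  have "T (i + j) x = inv (g [^] i \<otimes> g [^] j) \<otimes> x \<otimes> (g [^] i \<otimes> g [^] j)"
    unfolding T_def e by simp
  also have "\<dots> = T j (T i x)" unfolding T_def using gG x by (simp add: inv_mult_group m_assoc del: nat_pow_mult)
  finally show ?thesis .
qed

lemma T_Suc: "x \<in> carrier G \<Longrightarrow> T (Suc i) x = T 1 (T i x)"
  using T_add[of x i 1] by simp

lemma T_funpow: "x \<in> carrier G \<Longrightarrow> T i x = (T 1 ^^ i) x"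
proof (induction i)
  case (Suc i)
  then show ?case using T_Suc[of x i] by simp
qed simp

lemma T_n: "x \<in> A \<Longrightarrow> T n x = x"
proof -
  assume x: "x \<in> A"
  have "x \<otimes> g [^] n = g [^] n \<otimes> x" using comm[OF x gn] .
  have xc: "x \<in> carrier G" using AC[OF x] .
  have "inv (g [^] n) \<otimes> x \<otimes> g [^] n = inv (g [^] n) \<otimes> (g [^] n \<otimes> x)"
    using gG xc \<open>x \<otimes> g [^] n = g [^] n \<otimes> x\<close> by (simp add: m_assoc)
  also have "\<dots> = (inv (g [^] n) \<otimes> g [^] n) \<otimes> x" using gG xc by (simp add: m_assoc)
  also have "\<dots> = x" using gG xc by simp
  finally show ?thesis unfolding T_def .
qed

lemma T_pow: "x \<in> carrier G \<Longrightarrow> T i (x [^] (k::nat)) = (T i x) [^] k"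
  by (induction k) (simp_all add: T_mult)

lemma T_inj: "inj_on (T i) (carrier G)"
proof (rule inj_onI)
  fix x y assume xy: "x \<in> carrier G" "y \<in> carrier G" "T i x = T i y"
  then show "x = y" unfolding T_def using gG by simp
qed

lemma T1_maps: "T 1 ` A \<subseteq> A" using T_A by auto
lemma T1_inj: "inj_on (T 1) A" using T_inj inj_on_subset AC by blast

definition D :: "'a \<Rightarrow> 'a" where "D x = inv x \<otimes> T 1 x"

lemma D_A: "x \<in> A \<Longrightarrow> D x \<in> A"
  unfolding D_def using T_A subA by (simp add: subgroup.m_closed subgroup.m_inv_closed)

lemma D_one[simp]: "D \<one> = \<one>" unfolding D_def by simp

lemma D_mult: "x \<in> A \<Longrightarrow> y \<in> A \<Longrightarrow> D (x \<otimes> y) = D x \<otimes> D y"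
proof -
  assume x: "x \<in> A" and y: "y \<in> A"
  have xc: "x \<in> carrier G" "y \<in> carrier G" "T 1 x \<in> carrier G" "T 1 y \<in> carrier G"
    using x y AC T_A by auto
  have c: "inv y \<otimes> T 1 x = T 1 x \<otimes> inv y" using comm[OF subgroup.m_inv_closed[OF subA y] T_A[OF x]] .
  have "D (x \<otimes> y) = inv y \<otimes> inv x \<otimes> (T 1 x \<otimes> T 1 y)"
    unfolding D_def using xc by (simp add: T_mult inv_mult_group)
  also have "\<dots> = inv x \<otimes> (inv y \<otimes> T 1 x) \<otimes> T 1 y"
    using xc comm[OF subgroup.m_inv_closed[OF subA y] subgroup.m_inv_closed[OF subA x]]
    by (simp add: m_assoc)
  also have "\<dots> = D x \<otimes> D y" unfolding D_def using xc c by (simp add: m_assoc)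
  finally show ?thesis .
qed

lemma D_inv: "x \<in> A \<Longrightarrow> D (inv x) = inv (D x)"
proof -
  assume x: "x \<in> A"
  have ix: "inv x \<in> A" using subgroup.m_inv_closed[OF subA x] .
  have "D (inv x) \<otimes> D x = D (inv x \<otimes> x)" using D_mult[OF ix x] by simp
  also have "\<dots> = \<one>" using AC[OF x] by simp
  finally have e: "D (inv x) \<otimes> D x = \<one>" .
  have "inv (D x) = D (inv x)" by (rule inv_equality[OF e]) (use AC D_A x ix in auto)
  then show ?thesis by simp
qed

lemma D_T: "x \<in> A \<Longrightarrow> D (T i x) = T i (D x)"
proof -
  assume x: "x \<in> A"
  have xc: "x \<in> carrier G" using AC x by blast
  have "T 1 (T i x) = T i (T 1 x)" using T_add[OF xc, of i 1] T_add[OF xc, of 1 i] by (simp add: add.commute)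
  then show ?thesis unfolding D_def using xc by (simp add: T_mult T_inv)
qed

lemma Dpow_A: "x \<in> A \<Longrightarrow> (D ^^ k) x \<in> A"
  by (induction k) (simp_all add: D_A)

lemma Dpow_one[simp]: "(D ^^ k) \<one> = \<one>"
  by (induction k) simp_all

lemma Dpow_mult: "x \<in> A \<Longrightarrow> y \<in> A \<Longrightarrow> (D ^^ k) (x \<otimes> y) = (D ^^ k) x \<otimes> (D ^^ k) y"
  by (induction k) (simp_all add: D_mult Dpow_A)

lemma Dpow_inv: "x \<in> A \<Longrightarrow> (D ^^ k) (inv x) = inv ((D ^^ k) x)"
  by (induction k) (simp_all add: D_inv Dpow_A)

lemma Dpow_T: "x \<in> A \<Longrightarrow> (D ^^ k) (T i x) = T i ((D ^^ k) x)"
  by (induction k) (simp_all add: D_T Dpow_A)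

definition Nr :: "nat \<Rightarrow> 'a set" where "Nr k = {x \<in> A. (D ^^ k) x = \<one>}"

lemma Nr_subgroup: "subgroup (Nr k) G"
proof
  show "Nr k \<subseteq> carrier G" unfolding Nr_def using AC by auto
  show "\<one> \<in> Nr k" unfolding Nr_def using subA subgroup.one_closed by auto
  fix x y assume "x \<in> Nr k" "y \<in> Nr k"
  then show "x \<otimes> y \<in> Nr k" unfolding Nr_def
    using subA subgroup.m_closed by (auto simp: Dpow_mult Dpow_A AC)
next
  fix x assume "x \<in> Nr k"
  then show "inv x \<in> Nr k" unfolding Nr_def
    using subA subgroup.m_inv_closed by (auto simp: Dpow_inv)
qed

lemma Nr_0: "Nr 0 = {\<one>}" unfolding Nr_def using subA subgroup.one_closed by auto

lemma Nr_T: "x \<in> Nr k \<Longrightarrow> T i x \<in> Nr k"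
  unfolding Nr_def by (auto simp: T_A Dpow_T)

lemma Nr_D: "x \<in> Nr (Suc k) \<Longrightarrow> D x \<in> Nr k"
  unfolding Nr_def by (auto simp: D_A funpow_swap1)

end


context nilsetup begin

definition per :: "'a \<Rightarrow> nat" where "per c = (LEAST r. 0 < r \<and> T r c = c)"

lemma per_ex: "c \<in> A \<Longrightarrow> \<exists>r. 0 < r \<and> T r c = c"
  using T_n npos by blast

lemma per_prop: "c \<in> A \<Longrightarrow> 0 < per c \<and> T (per c) c = c"
  unfolding per_def by (rule LeastI_ex[OF per_ex])

lemma per_pos: "c \<in> A \<Longrightarrow> 0 < per c" using per_prop by simp
lemma per_fix: "c \<in> A \<Longrightarrow> T (per c) c = c" using per_prop by simp

lemma per_min: "c \<in> A \<Longrightarrow> 0 < i \<Longrightarrow> i < per c \<Longrightarrow> T i c \<noteq> c"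
proof -
  assume "0 < i" "i < per c"
  have "\<not> (0 < i \<and> T i c = c)" by (rule not_less_Least) (use \<open>i < per c\<close> in \<open>simp add: per_def\<close>)
  then show ?thesis using \<open>0 < i\<close> by simp
qed

lemma T_mult_per: "c \<in> A \<Longrightarrow> T (per c * q) c = c"
proof (induction q)
  case (Suc q)
  have "T (per c * Suc q) c = T (per c) (T (per c * q) c)"
    using T_add[of c "per c * q" "per c"] AC[OF Suc.prems] by (simp add: add.commute)
  then show ?case using Suc per_fix by simp
qed (simp add: AC)

lemma T_mod_per: "c \<in> A \<Longrightarrow> T i c = T (i mod per c) c"
proof -
  assume c: "c \<in> A"
  have e: "T (per c * (i div per c) + i mod per c) c = T (i mod per c) (T (per c * (i div per c)) c)"
    by (rule T_add[OF AC[OF c]])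
  then have "T i c = T (i mod per c) (T (per c * (i div per c)) c)" by simp
  then show ?thesis using T_mult_per[OF c] by simp
qed

lemma per_dvd_iff:
  assumes c: "c \<in> A" shows "T i c = c \<longleftrightarrow> per c dvd i"
proof
  assume "T i c = c"
  then have "T (i mod per c) c = c" using T_mod_per[OF c, of i] by simp
  moreover have "i mod per c < per c" using per_pos[OF c] by simp
  ultimately have "\<not> 0 < i mod per c" using per_min[OF c, of "i mod per c"] by blast
  then show "per c dvd i" by (simp add: dvd_eq_mod_eq_0)
next
  assume "per c dvd i"
  then obtain q where "i = per c * q" by blast
  then show "T i c = c" using T_mult_per[OF c] by simp
qed

lemma per_dvd_n: "c \<in> A \<Longrightarrow> per c dvd n"
  using per_dvd_iff[of c n] T_n[of c] by simp

lemma T_inj_per: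
  assumes c: "c \<in> A" and ij: "i < per c" "j < per c" "T i c = T j c"
  shows "i = j"
proof (rule ccontr)
  assume ne: "i \<noteq> j"
  have cc: "c \<in> carrier G" using AC[OF c] .
  have gen: "False" if "a < b" "b < per c" "T a c = T b c" for a b
  proof -
    have "T b c = T a (T (b - a) c)" using T_add[OF cc, of "b - a" a] that(1) by simp
    then have "T a (T (b - a) c) = T a c" using that(3) by simp
    then have "T (b - a) c = c" using T_inj[of a] cc by (simp add: inj_on_def)
    then show False using per_min[OF c, of "b - a"] that by simp
  qed
  from ne consider "i < j" | "j < i" by linarith
  then show False
  proof cases
    case 1 then show False using gen[of i j] ij by simp
  next
    case 2 then show False using gen[of j i] ij by simp
  qed
qed

definition Hc :: "'a \<Rightarrow> 'a set" where "Hc c = (\<lambda>i. T i c \<otimes> inv c) ` UNIV"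

lemma Hc_eq: "c \<in> A \<Longrightarrow> Hc c = (\<lambda>i. T i c \<otimes> inv c) ` {0..<per c}"
proof -
  assume c: "c \<in> A"
  have "T i c \<otimes> inv c \<in> (\<lambda>i. T i c \<otimes> inv c) ` {0..<per c}" for i
    using T_mod_per[OF c, of i] per_pos[OF c] by (intro image_eqI[of _ _ "i mod per c"]) auto
  then show ?thesis unfolding Hc_def by auto
qed

lemma Hc_A: "c \<in> A \<Longrightarrow> Hc c \<subseteq> A"
  unfolding Hc_def using T_A subA by (auto intro!: subgroup.m_closed subgroup.m_inv_closed)

lemma card_Hc: "c \<in> A \<Longrightarrow> card (Hc c) = per c"
proof -
  assume c: "c \<in> A"
  have "inj_on (\<lambda>i. T i c \<otimes> inv c) {0..<per c}"
  proof (rule inj_onI)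
    fix i j assume ij: "i \<in> {0..<per c}" "j \<in> {0..<per c}" "T i c \<otimes> inv c = T j c \<otimes> inv c"
    then have "T i c = T j c" using right_cancel[of "inv c" "T i c" "T j c"] AC[OF c] by simp
    then show "i = j" using T_inj_per[OF c] ij by auto
  qed
  then show ?thesis using Hc_eq[OF c] by (simp add: card_image)
qed

lemma finite_Hc: "c \<in> A \<Longrightarrow> finite (Hc c)"
  using Hc_A finA finite_subset by blast

lemma one_Hc: "c \<in> A \<Longrightarrow> \<one> \<in> Hc c"
  unfolding Hc_def using AC by (auto intro!: image_eqI[of _ _ 0])

end


lemma all_prime_factors_pow:
  fixes m p :: nat
  assumes "Factorial_Ring.prime p" "0 < m" "\<forall>q. Factorial_Ring.prime q \<longrightarrow> q dvd m \<longrightarrow> q = p"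
  shows "\<exists>a. m = p ^ a"
  using assms(2,3)
proof (induction m rule: less_induct)
  case (less m)
  show ?case
  proof (cases "m = 1")
    case True then show ?thesis by (intro exI[of _ 0]) simp
  next
    case False
    then obtain q where q: "Factorial_Ring.prime q" "q dvd m" using prime_factor_nat by blast
    then have qp: "q = p" using less.prems by blast
    then obtain m' where m': "m = p * m'" using q by blast
    have "0 < m'" using m' less.prems(1) by simp
    moreover have "m' < m" using m' less.prems(1) prime_gt_1_nat[OF assms(1)] by simp
    moreover have "\<forall>q. Factorial_Ring.prime q \<longrightarrow> q dvd m' \<longrightarrow> q = p" using less.prems(2) m' by simp
    ultimately obtain a where "m' = p ^ a" using less.IH by blast
    then show ?thesis using m' by (intro exI[of _ "Suc a"]) simp
  qed
qed

context nilsetup begin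

lemma Hc_elem: "x \<in> Hc c \<Longrightarrow> \<exists>i. x = T i c \<otimes> inv c"
  unfolding Hc_def by auto

lemma Hc_elemI: "T i c \<otimes> inv c \<in> Hc c"
  unfolding Hc_def by auto

lemma Hc_T:
  assumes c: "c \<in> A" and sub: "subgroup (Hc c) G" and x: "x \<in> Hc c"
  shows "T 1 x \<in> Hc c"
proof -
  obtain i where i: "x = T i c \<otimes> inv c" using Hc_elem[OF x] by blast
  have cc: "c \<in> carrier G" using AC[OF c] .
  have u: "T 1 (T i c) = T (Suc i) c" using T_add[OF cc, of i 1] by simp
  have "T 1 x = T (Suc i) c \<otimes> inv (T 1 c)" unfolding i using cc u by (simp add: T_mult T_inv)
  also have "\<dots> = (T (Suc i) c \<otimes> inv c) \<otimes> inv (T 1 c \<otimes> inv c)"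
    using cc by (simp add: inv_mult_group m_assoc)
  finally have e: "T 1 x = (T (Suc i) c \<otimes> inv c) \<otimes> inv (T 1 c \<otimes> inv c)" .
  show ?thesis unfolding e
    by (intro subgroup.m_closed[OF sub] subgroup.m_inv_closed[OF sub] Hc_elemI)
qed

lemma Hc_per:
  assumes c: "c \<in> A" and x: "x \<in> Hc c"
  shows "T (per c) x = x"
proof -
  obtain i where i: "x = T i c \<otimes> inv c" using Hc_elem[OF x] by blast
  have cc: "c \<in> carrier G" using AC[OF c] .
  have "T (per c) (T i c) = T i (T (per c) c)"
    using T_add[OF cc, of i "per c"] T_add[OF cc, of "per c" i] by (simp add: add.commute)
  then show ?thesis unfolding i using cc per_fix[OF c] by (simp add: T_mult T_inv)
qed

lemma Hc_carrier: "c \<in> A \<Longrightarrow> Hc c \<subseteq> carrier G"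
  using Hc_A AC by blast

lemma pow_comm_distrib:
  assumes x: "x \<in> A" and y: "y \<in> A" shows "(x \<otimes> y) [^] (k::nat) = x [^] k \<otimes> y [^] k"
  by (rule pow_mult_distrib[OF comm[OF x y] AC[OF x] AC[OF y]])

lemma Hc_pow:
  assumes c: "c \<in> A" and e: "c [^] (k::nat) = \<one>" and x: "x \<in> Hc c"
  shows "x [^] k = \<one>"
proof -
  obtain i where i: "x = T i c \<otimes> inv c" using Hc_elem[OF x] by blast
  have cc: "c \<in> carrier G" using AC[OF c] .
  have "x [^] k = T i c [^] k \<otimes> inv c [^] k"
    unfolding i by (rule pow_comm_distrib[OF T_A[OF c] subgroup.m_inv_closed[OF subA c]])
  also have "\<dots> = \<one>" using cc e by (simp add: T_pow[symmetric] nat_pow_inv)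
  finally show ?thesis .
qed

lemma D_pow:
  assumes c: "c \<in> A" and e: "c [^] (k::nat) = \<one>"
  shows "D c [^] k = \<one>"
proof -
  have cc: "c \<in> carrier G" using AC[OF c] .
  have "D c [^] k = inv c [^] k \<otimes> T 1 c [^] k"
    unfolding D_def by (rule pow_comm_distrib[OF subgroup.m_inv_closed[OF subA c] T_A[OF c]])
  also have "\<dots> = \<one>" using cc e by (simp add: T_pow[symmetric] nat_pow_inv)
  finally show ?thesis .
qed

lemma per_ppow:
  assumes c: "c \<in> A" and p: "Factorial_Ring.prime p" and e: "c [^] (p ^ e) = \<one>" and sub: "subgroup (Hc c) G"
  shows "\<exists>a. per c = p ^ a"
proof (rule all_prime_factors_pow[OF p per_pos[OF c]], intro allI impI)
  fix q assume q: "Factorial_Ring.prime q" "q dvd per c"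
  define GH where "GH = G\<lparr>carrier := Hc c\<rparr>"
  have grp: "group GH" unfolding GH_def by (rule subgroup.subgroup_is_group[OF sub is_group])
  have fin: "finite (carrier GH)" unfolding GH_def using finite_Hc[OF c] by simp
  obtain m where m: "per c = q * m" using q by blast
  have ord: "order GH = q ^ 1 * m" unfolding GH_def order_def using card_Hc[OF c] m by simp
  obtain Q where Q0: "subgroup Q GH" "card Q = q ^ 1" using sylow_thm[OF q(1) grp ord fin] by (elim exE conjE)
  then have Q: "subgroup Q GH" "card Q = q" by simp_all
  have "card Q > 1" using Q(2) prime_gt_1_nat[OF q(1)] by simp
  then obtain x where x: "x \<in> Q" "x \<noteq> \<one>"
  proof -
    assume h: "\<And>x. x \<in> Q \<Longrightarrow> x \<noteq> \<one> \<Longrightarrow> thesis"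
    have "\<not> Q \<subseteq> {\<one>}"
    proof
      assume "Q \<subseteq> {\<one>}"
      then have "card Q \<le> card {\<one>}" by (intro card_mono) auto
      then have "card Q \<le> 1" by simp
      then show False using \<open>card Q > 1\<close> by simp
    qed
    then show thesis using h by blast
  qed
  have QH: "Q \<subseteq> Hc c" using subgroup.subset[OF Q(1)] unfolding GH_def by simp
  have xc: "x \<in> carrier G" using QH x(1) Hc_carrier[OF c] by blast
  have gQ: "group (GH\<lparr>carrier := Q\<rparr>)" by (rule subgroup.subgroup_is_group[OF Q(1) grp])
  have "x [^]\<^bsub>GH\<lparr>carrier := Q\<rparr>\<^esub> order (GH\<lparr>carrier := Q\<rparr>) = \<one>\<^bsub>GH\<lparr>carrier := Q\<rparr>\<^esub>"
    using group.pow_order_eq_1[OF gQ] x(1) by simp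
  then have xq: "x [^] q = \<one>" unfolding GH_def order_def using Q(2)
    by (simp add: nat_pow_def)
  have o1: "ord x dvd q" using xq pow_eq_id[OF xc] by simp
  have o2: "ord x dvd p ^ e"
  proof -
    have "x \<in> Hc c" using QH x(1) by blast
    then have "x [^] (p ^ e) = \<one>" using Hc_pow[OF c e] by blast
    then show ?thesis using pow_eq_id[OF xc] by simp
  qed
  have "ord x \<noteq> 1" using ord_eq_1[OF xc] x(2) by simp
  then have "ord x = q" using o1 q(1) unfolding prime_nat_iff by blast
  then have "q dvd p" using o2 prime_dvd_power[OF q(1)] by simp
  then show "q = p" using primes_dvd_imp_eq[OF q(1) p] by simp
qed

end


context nilsetup begin

lemma fix_exists:
  assumes c: "c \<in> A" and sub: "subgroup (Hc c) G" and p: "Factorial_Ring.prime p"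
    and per: "per c = p ^ a" and a: "0 < a"
  shows "\<exists>x\<in>Hc c. x \<noteq> \<one> \<and> T 1 x = x"
proof -
  let ?X = "Hc c"
  have maps: "T 1 ` ?X \<subseteq> ?X" using Hc_T[OF c sub] by blast
  have inj: "inj_on (T 1) ?X" using T_inj inj_on_subset Hc_carrier[OF c] by blast
  have cyc: "\<forall>x\<in>?X. (T 1 ^^ (p ^ a)) x = x"
  proof
    fix x assume x: "x \<in> ?X"
    have "(T 1 ^^ (p ^ a)) x = T (p ^ a) x" using T_funpow[of x "p ^ a"] x Hc_carrier[OF c] by auto
    also have "\<dots> = x" using Hc_per[OF c x] per by simp
    finally show "(T 1 ^^ (p ^ a)) x = x" .
  qed
  have m: "card ?X mod p = card {x\<in>?X. T 1 x = x} mod p"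
    using fixpoint_mod[OF p finite_Hc[OF c] maps inj cyc] .
  have "card ?X mod p = 0" using card_Hc[OF c] per a by (simp add: dvd_imp_mod_0)
  then have dv: "p dvd card {x\<in>?X. T 1 x = x}" using m by (simp add: dvd_eq_mod_eq_0)
  have fin: "finite {x\<in>?X. T 1 x = x}" using finite_Hc[OF c] by simp
  have one: "\<one> \<in> {x\<in>?X. T 1 x = x}" using one_Hc[OF c] by simp
  then have "card {x\<in>?X. T 1 x = x} > 0" using fin card_gt_0_iff by blast
  then have "card {x\<in>?X. T 1 x = x} \<ge> p" using dv by (simp add: dvd_imp_le)
  then have gt: "card {x\<in>?X. T 1 x = x} > 1" using prime_gt_1_nat[OF p] by simp
  show ?thesis
  proof (rule ccontr)
    assume "\<not> ?thesis"
    then have "{x\<in>?X. T 1 x = x} \<subseteq> {\<one>}" by blast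
    then have "card {x\<in>?X. T 1 x = x} \<le> card {\<one>}" by (intro card_mono) auto
    then show False using gt by simp
  qed
qed

lemma main_pp:
  assumes p: "Factorial_Ring.prime p"
  shows "\<And>c. c \<in> A \<Longrightarrow> (\<And>c. c \<in> A \<Longrightarrow> subgroup (Hc c) G) \<Longrightarrow> c [^] (p ^ e) = \<one> \<Longrightarrow>
     per c = p ^ a \<Longrightarrow> (D ^^ (Suc a)) c = \<one>"
proof (induction a rule: less_induct)
  case (less a c)
  note c = less.prems(1) and sub = less.prems(2) and e = less.prems(3) and per = less.prems(4)
  have cc: "c \<in> carrier G" using AC[OF c] .
  show ?case
  proof (cases "a = 0")
    case True
    then have "T 1 c = c" using per per_fix[OF c] by simp
    then show ?thesis using cc True by (simp add: D_def)
  next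
    case False
    obtain x where x: "x \<in> Hc c" "x \<noteq> \<one>" "T 1 x = x"
      using fix_exists[OF c sub[OF c] p per] False by blast
    obtain i where i: "i < per c" "x = T i c \<otimes> inv c"
      using x(1) Hc_eq[OF c] by auto
    have i0: "i \<noteq> 0"
    proof
      assume "i = 0"
      then have "x = \<one>" using i(2) cc by simp
      then show False using x(2) by simp
    qed
    define d where "d = D c"
    have dA: "d \<in> A" unfolding d_def using D_A[OF c] .
    have Tid: "T i d = d"
    proof -
      let ?u = "T i c" and ?v = "T 1 c" and ?w = "T (Suc i) c"
      have uc: "?u \<in> carrier G" "?v \<in> carrier G" "?w \<in> carrier G" using cc by auto
      have w1: "T 1 ?u = ?w" using T_add[OF cc, of i 1] by simp
      have w2: "T i ?v = ?w" using T_add[OF cc, of 1 i] by simp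
      have eq: "?w \<otimes> inv ?v = ?u \<otimes> inv c"
        using x(3) unfolding i(2) using cc w1 by (simp add: T_mult T_inv)
      have "T i d = inv ?u \<otimes> ?w" unfolding d_def D_def using cc w2 by (simp add: T_mult T_inv)
      also have "\<dots> = inv ?u \<otimes> (?w \<otimes> inv ?v) \<otimes> ?v" using uc by (simp add: m_assoc)
      also have "\<dots> = inv ?u \<otimes> (?u \<otimes> inv c) \<otimes> ?v" using eq by simp
      also have "\<dots> = inv c \<otimes> ?v" using uc cc by (simp add: m_assoc)
      also have "\<dots> = d" unfolding d_def D_def by simp
      finally show ?thesis .
    qed
    have "per d dvd i" using per_dvd_iff[OF dA] Tid by simp
    then have pdi: "per d \<le> i" using i0 by (simp add: dvd_imp_le)
    have "T (per c) d = d" unfolding d_def using D_T[OF c, of "per c"] per_fix[OF c] by simp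
    then have "per d dvd per c" using per_dvd_iff[OF dA] by simp
    then obtain a' where a': "per d = p ^ a'" "a' \<le> a" using per divides_primepow_nat[OF p] by auto
    have "p ^ a' < p ^ a" using a'(1) pdi i(1) per by simp
    then have aa: "a' < a" using prime_gt_1_nat[OF p] by (simp add: power_strict_increasing_iff)
    have de: "d [^] (p ^ e) = \<one>" unfolding d_def using D_pow[OF c e] .
    have IH: "(D ^^ (Suc a')) d = \<one>" using less.IH[OF aa dA sub de a'(1)] .
    have "(D ^^ (Suc a)) c = (D ^^ (a - Suc a')) ((D ^^ (Suc a')) d)"
    proof -
      have "Suc a = (a - Suc a') + Suc a' + 1" using aa by simp
      then have "(D ^^ (Suc a)) c = (D ^^ (a - Suc a')) ((D ^^ (Suc a')) ((D ^^ 1) c))"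
        by (metis funpow_add comp_apply)
      then show ?thesis unfolding d_def by simp
    qed
    then show ?thesis using IH by simp
  qed
qed

lemma D_kill_pp:
  assumes c: "c \<in> A" and sub: "\<And>c. c \<in> A \<Longrightarrow> subgroup (Hc c) G"
    and p: "Factorial_Ring.prime p" and e: "c [^] (p ^ e) = \<one>"
    and M: "\<And>a. p ^ a dvd n \<Longrightarrow> a \<le> M"
  shows "(D ^^ (Suc M)) c = \<one>"
proof -
  obtain a where a: "per c = p ^ a" using per_ppow[OF c p e sub[OF c]] by blast
  have "a \<le> M" using M per_dvd_n[OF c] a by simp
  have k: "(D ^^ (Suc a)) c = \<one>" using main_pp[OF p c sub e a] .
  have "Suc M = (M - a) + Suc a" using \<open>a \<le> M\<close> by simp
  then have "(D ^^ (Suc M)) c = (D ^^ (M - a)) ((D ^^ (Suc a)) c)" by (metis funpow_add comp_apply)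
  then show ?thesis using k by simp
qed

end


context group begin

definition com :: "'a \<Rightarrow> 'a \<Rightarrow> 'a" where "com x y = inv x \<otimes> inv y \<otimes> x \<otimes> y"

lemma com_carrier[simp]: "x \<in> carrier G \<Longrightarrow> y \<in> carrier G \<Longrightarrow> com x y \<in> carrier G"
  unfolding com_def by simp

lemma canc1'[simp]: "x \<in> carrier G \<Longrightarrow> y \<in> carrier G \<Longrightarrow> x \<otimes> (inv x \<otimes> y) = y"
  by (simp add: m_assoc[symmetric])
lemma canc2'[simp]: "x \<in> carrier G \<Longrightarrow> y \<in> carrier G \<Longrightarrow> inv x \<otimes> (x \<otimes> y) = y"
  by (simp add: m_assoc[symmetric])

lemma com_mult_right_eq:
  assumes "x \<in> carrier G" "y1 \<in> carrier G" "y2 \<in> carrier G"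
  shows "com x (y1 \<otimes> y2) = com x y2 \<otimes> (inv y2 \<otimes> com x y1 \<otimes> y2)"
  unfolding com_def using assms by (simp add: m_assoc inv_mult_group)

lemma com_mult_left_eq:
  assumes "x1 \<in> carrier G" "x2 \<in> carrier G" "y \<in> carrier G"
  shows "com (x1 \<otimes> x2) y = (inv x2 \<otimes> com x1 y \<otimes> x2) \<otimes> com x2 y"
  unfolding com_def using assms by (simp add: m_assoc inv_mult_group)

lemma com_mult_right:
  assumes K: "subgroup K G" and cj: "\<And>y k. y \<in> carrier G \<Longrightarrow> k \<in> K \<Longrightarrow> inv y \<otimes> k \<otimes> y \<in> K"
    and xy: "x \<in> carrier G" "y1 \<in> carrier G" "y2 \<in> carrier G"
    and h: "com x y1 \<in> K" "com x y2 \<in> K"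
  shows "com x (y1 \<otimes> y2) \<in> K"
  unfolding com_mult_right_eq[OF xy] by (intro subgroup.m_closed[OF K] h cj xy)

lemma com_mult_left:
  assumes K: "subgroup K G" and cj: "\<And>y k. y \<in> carrier G \<Longrightarrow> k \<in> K \<Longrightarrow> inv y \<otimes> k \<otimes> y \<in> K"
    and xy: "x1 \<in> carrier G" "x2 \<in> carrier G" "y \<in> carrier G"
    and h: "com x1 y \<in> K" "com x2 y \<in> K"
  shows "com (x1 \<otimes> x2) y \<in> K"
  unfolding com_mult_left_eq[OF xy] by (intro subgroup.m_closed[OF K] h cj xy)

end

context nilsetup begin

lemma Nr_conj: "y \<in> carrier G \<Longrightarrow> k \<in> Nr r \<Longrightarrow> inv y \<otimes> k \<otimes> y \<in> Nr r"
proof -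
  assume y: "y \<in> carrier G" and k: "k \<in> Nr r"
  obtain a i where a: "a \<in> A" "y = a \<otimes> g [^] (i::nat)" using gen[OF y] by blast
  have kA: "k \<in> A" using k unfolding Nr_def by simp
  have ac: "a \<in> carrier G" "k \<in> carrier G" using AC a kA by auto
  have "inv y \<otimes> k \<otimes> y = inv (g [^] i) \<otimes> (inv a \<otimes> (k \<otimes> a)) \<otimes> g [^] i"
    unfolding a(2) using ac gG by (simp add: m_assoc inv_mult_group)
  also have "\<dots> = T i k" unfolding T_def using comm[OF kA a(1)] ac by simp
  finally show ?thesis using Nr_T[OF k] by simp
qed

lemma gen_right:
  assumes K: "subgroup K G" and cj: "\<And>y k. y \<in> carrier G \<Longrightarrow> k \<in> K \<Longrightarrow> inv y \<otimes> k \<otimes> y \<in> K"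
    and x: "x \<in> carrier G" and hA: "\<And>a. a \<in> A \<Longrightarrow> com x a \<in> K" and hg: "com x g \<in> K"
    and y: "y \<in> carrier G"
  shows "com x y \<in> K"
proof -
  obtain a i where a: "a \<in> A" "y = a \<otimes> g [^] (i::nat)" using gen[OF y] by blast
  have "com x (a \<otimes> g [^] i) \<in> K" for i :: nat
  proof (induction i)
    case 0 then show ?case using hA[OF a(1)] AC[OF a(1)] by simp
  next
    case (Suc i)
    have "a \<otimes> g [^] Suc i = (a \<otimes> g [^] i) \<otimes> g" using AC[OF a(1)] gG by (simp add: m_assoc)
    then show ?case using com_mult_right[OF K cj x _ gG Suc hg] AC[OF a(1)] gG by simp
  qed
  then show ?thesis using a by simp
qed

lemma gen_left:
  assumes K: "subgroup K G" and cj: "\<And>y k. y \<in> carrier G \<Longrightarrow> k \<in> K \<Longrightarrow> inv y \<otimes> k \<otimes> y \<in> K"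
    and hA: "\<And>a y. a \<in> A \<Longrightarrow> y \<in> carrier G \<Longrightarrow> com a y \<in> K"
    and hg: "\<And>y. y \<in> carrier G \<Longrightarrow> com g y \<in> K"
    and x: "x \<in> carrier G" and y: "y \<in> carrier G"
  shows "com x y \<in> K"
proof -
  obtain a i where a: "a \<in> A" "x = a \<otimes> g [^] (i::nat)" using gen[OF x] by blast
  have "com (a \<otimes> g [^] i) y \<in> K" for i :: nat
  proof (induction i)
    case 0 then show ?case using hA[OF a(1) y] AC[OF a(1)] by simp
  next
    case (Suc i)
    have "a \<otimes> g [^] Suc i = (a \<otimes> g [^] i) \<otimes> g" using AC[OF a(1)] gG by (simp add: m_assoc)
    then show ?case using com_mult_left[OF K cj _ gG y Suc hg[OF y]] AC[OF a(1)] gG by simp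
  qed
  then show ?thesis using a by simp
qed

lemma com_A: "a \<in> A \<Longrightarrow> b \<in> A \<Longrightarrow> com a b = \<one>"
  unfolding com_def using comm AC
  by (metis inv_closed inv_mult_group l_inv m_assoc m_closed)

lemma com_Ag: "a \<in> A \<Longrightarrow> com a g = D a"
  unfolding com_def D_def T_def using AC gG by (simp add: m_assoc)

lemma com_gA: "b \<in> A \<Longrightarrow> com g b = D (inv b)"
proof -
  assume b: "b \<in> A"
  have ib: "inv b \<in> A" using subgroup.m_inv_closed[OF subA b] .
  have "com g b = T 1 (inv b) \<otimes> b" unfolding com_def T_def using AC[OF b] gG by (simp add: m_assoc)
  also have "\<dots> = b \<otimes> T 1 (inv b)" using comm[OF T_A[OF ib] b] .
  also have "\<dots> = D (inv b)" unfolding D_def using AC[OF b] by simp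
  finally show ?thesis .
qed

lemma com_in_Nr_all:
  assumes kill: "\<And>c. c \<in> A \<Longrightarrow> (D ^^ Suc M) c = \<one>"
  shows "x \<in> carrier G \<Longrightarrow> y \<in> carrier G \<Longrightarrow> com x y \<in> Nr M"
proof -
  have ANr: "c \<in> Nr (Suc M)" if "c \<in> A" for c unfolding Nr_def using kill that by simp
  have K: "subgroup (Nr M) G" by (rule Nr_subgroup)
  have cj: "\<And>y k. y \<in> carrier G \<Longrightarrow> k \<in> Nr M \<Longrightarrow> inv y \<otimes> k \<otimes> y \<in> Nr M" using Nr_conj by blast
  have one: "\<one> \<in> Nr M" using subgroup.one_closed[OF K] .
  show "x \<in> carrier G \<Longrightarrow> y \<in> carrier G \<Longrightarrow> com x y \<in> Nr M"
  proof (rule gen_left[OF K cj])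
    fix a y assume a: "a \<in> A" and y: "y \<in> carrier G"
    show "com a y \<in> Nr M"
    proof (rule gen_right[OF K cj AC[OF a] _ _ y])
      fix b assume "b \<in> A" then show "com a b \<in> Nr M" using com_A[OF a] one by simp
    next
      show "com a g \<in> Nr M" using com_Ag[OF a] Nr_D[OF ANr[OF a]] by simp
    qed
  next
    fix y assume y: "y \<in> carrier G"
    show "com g y \<in> Nr M"
    proof (rule gen_right[OF K cj gG _ _ y])
      fix b assume b: "b \<in> A"
      show "com g b \<in> Nr M" using com_gA[OF b] Nr_D[OF ANr[OF subgroup.m_inv_closed[OF subA b]]] by simp
    next
      show "com g g \<in> Nr M" unfolding com_def using gG one by (simp add: m_assoc)
    qed
  qed
qed

lemma com_in_Nr_step:
  assumes x: "x \<in> Nr (Suc r)" and y: "y \<in> carrier G"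
  shows "com x y \<in> Nr r"
proof -
  have xA: "x \<in> A" using x unfolding Nr_def by simp
  have K: "subgroup (Nr r) G" by (rule Nr_subgroup)
  have cj: "\<And>y k. y \<in> carrier G \<Longrightarrow> k \<in> Nr r \<Longrightarrow> inv y \<otimes> k \<otimes> y \<in> Nr r" using Nr_conj by blast
  have one: "\<one> \<in> Nr r" using subgroup.one_closed[OF K] .
  show ?thesis
  proof (rule gen_right[OF K cj AC[OF xA] _ _ y])
    fix b assume "b \<in> A" then show "com x b \<in> Nr r" using com_A[OF xA] one by simp
  next
    show "com x g \<in> Nr r" using com_Ag[OF xA] Nr_D[OF x] by simp
  qed
qed

lemma lower_central_Nr:
  assumes kill: "\<And>c. c \<in> A \<Longrightarrow> (D ^^ Suc M) c = \<one>"
  shows "k \<le> M \<Longrightarrow> lower_central G (Suc k) \<subseteq> Nr (M - k)"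
proof (induction k)
  case 0
  have "lower_central G (Suc 0) = generate G {inv x \<otimes> inv y \<otimes> x \<otimes> y | x y. x \<in> carrier G \<and> y \<in> carrier G}"
    by (simp add: commutator_subgroup_def)
  also have "\<dots> \<subseteq> Nr M"
    by (rule generate_subgroup_incl[OF _ Nr_subgroup]) (use com_in_Nr_all[OF kill] in \<open>auto simp: com_def\<close>)
  finally show ?case by simp
next
  case (Suc k)
  then have IH: "lower_central G (Suc k) \<subseteq> Nr (Suc (M - Suc k))" by (simp add: Suc_diff_Suc)
  have "lower_central G (Suc (Suc k)) = generate G {inv x \<otimes> inv y \<otimes> x \<otimes> y | x y. x \<in> lower_central G (Suc k) \<and> y \<in> carrier G}"
    by (simp add: commutator_subgroup_def)
  also have "\<dots> \<subseteq> Nr (M - Suc k)"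
    by (rule generate_subgroup_incl[OF _ Nr_subgroup]) (use com_in_Nr_step IH in \<open>auto simp: com_def\<close>)
  finally show ?case .
qed

lemma one_lower_central: "\<one> \<in> lower_central G k"
  by (cases k) (auto simp: commutator_subgroup_def intro: generate.one)

lemma lower_central_trivial:
  assumes kill: "\<And>c. c \<in> A \<Longrightarrow> (D ^^ Suc M) c = \<one>"
  shows "lower_central G (Suc M) = {\<one>}"
proof -
  have "lower_central G (Suc M) \<subseteq> {\<one>}" using lower_central_Nr[OF kill, of M] Nr_0 by simp
  moreover have "\<one> \<in> lower_central G (Suc M)" by (rule one_lower_central)
  ultimately show ?thesis by blast
qed

end


lemma (in group) cyclic_quotient_setup:
  assumes AG: "A \<lhd> G" and n1: "n > 1" and iso: "G Mod A \<cong> integer_mod_group n"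
  shows "\<exists>g \<in> carrier G. g [^] n \<in> A \<and> (\<forall>x\<in>carrier G. \<exists>a\<in>A. \<exists>i::nat. x = a \<otimes> g [^] i)"
proof -
  let ?M = "G Mod A" and ?Z = "integer_mod_group n"
  obtain h where h: "h \<in> hom ?M ?Z" "bij_betw h (carrier ?M) (carrier ?Z)"
    using iso unfolding is_iso_def iso_def by blast
  have grpM: "group ?M" by (rule normal.factorgroup_is_group[OF AG])
  have grpZ: "group ?Z" by simp
  have subA: "subgroup A G" using AG by (rule normal_imp_subgroup)
  have cZ: "carrier ?Z = {0..<int n}" using n1 by (simp add: carrier_integer_mod_group)
  have "1 \<in> carrier ?Z" using cZ n1 by simp
  then obtain C where C: "C \<in> carrier ?M" "h C = 1"
    using h(2) unfolding bij_betw_def by (metis imageE)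
  then obtain g where g: "g \<in> carrier G" "C = A #> g" unfolding carrier_FactGroup by blast
  have powC: "C [^]\<^bsub>?M\<^esub> k = A #> (g [^] k)" for k :: nat
  proof (induction k)
    case 0
    have "A #> \<one> = A" using subA by (simp add: coset_mult_one subgroup.subset)
    then show ?case by simp
  next
    case (Suc k)
    have "C [^]\<^bsub>?M\<^esub> Suc k = (A #> (g [^] k)) <#> (A #> g)" using Suc g by simp
    also have "\<dots> = A #> (g [^] k \<otimes> g)" using normal.rcos_sum[OF AG] g by simp
    finally show ?case by simp
  qed
  have hpow: "h (C [^]\<^bsub>?M\<^esub> k) = int k mod int n" for k :: nat
    using hom_nat_pow[OF h(1) C(1) grpM grpZ, of k] C(2) by simp
  have inj: "inj_on h (carrier ?M)" using h(2) bij_betw_def by blast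
  have CM: "C [^]\<^bsub>?M\<^esub> k \<in> carrier ?M" for k :: nat using grpM C(1)
    by (simp add: monoid.nat_pow_closed group.is_monoid)
  have gen: "\<forall>x\<in>carrier G. \<exists>a\<in>A. \<exists>i::nat. x = a \<otimes> g [^] i"
  proof
    fix x assume x: "x \<in> carrier G"
    have X: "A #> x \<in> carrier ?M" unfolding carrier_FactGroup using x by blast
    have hX: "h (A #> x) \<in> {0..<int n}" using h(1) X cZ unfolding hom_def by auto
    define k where "k = nat (h (A #> x))"
    have "h (C [^]\<^bsub>?M\<^esub> k) = h (A #> x)" using hpow[of k] hX unfolding k_def by simp
    then have "C [^]\<^bsub>?M\<^esub> k = A #> x" using inj CM X by (simp add: inj_on_def)
    then have "A #> (g [^] k) = A #> x" using powC by simp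
    then have "x \<in> A #> (g [^] k)" using rcos_self[OF x subA] by simp
    then obtain a where "a \<in> A" "x = a \<otimes> g [^] k" unfolding r_coset_def by blast
    then show "\<exists>a\<in>A. \<exists>i::nat. x = a \<otimes> g [^] i" by blast
  qed
  have "h (C [^]\<^bsub>?M\<^esub> n) = h \<one>\<^bsub>?M\<^esub>"
  proof -
    have gh: "group_hom ?M ?Z h" using grpM grpZ h(1) unfolding group_hom_def group_hom_axioms_def by blast
    have "h \<one>\<^bsub>?M\<^esub> = \<one>\<^bsub>?Z\<^esub>" by (rule group_hom.hom_one[OF gh])
    then show ?thesis using hpow[of n] by simp
  qed
  then have "C [^]\<^bsub>?M\<^esub> n = \<one>\<^bsub>?M\<^esub>" using inj CM monoid.one_closed[OF group.is_monoid[OF grpM]] by (simp add: inj_on_def)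
  then have "A #> (g [^] n) = A" using powC by simp
  then have "g [^] n \<in> A" using rcos_self[OF _ subA, of "g [^] n"] g by simp
  then show ?thesis using g gen by blast
qed

context nilsetup begin

lemma subgroup_nat_pow: "subgroup K G \<Longrightarrow> x \<in> K \<Longrightarrow> x [^] (k::nat) \<in> K"
  by (induction k) (simp_all add: subgroup.one_closed subgroup.m_closed)

lemma A_exp: "c \<in> A \<Longrightarrow> c [^] card A = \<one>"
proof -
  assume c: "c \<in> A"
  have grp: "group (G\<lparr>carrier := A\<rparr>)" by (rule subgroup.subgroup_is_group[OF subA is_group])
  have "c [^]\<^bsub>G\<lparr>carrier := A\<rparr>\<^esub> order (G\<lparr>carrier := A\<rparr>) = \<one>\<^bsub>G\<lparr>carrier := A\<rparr>\<^esub>"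
    using group.pow_order_eq_1[OF grp] c by simp
  then show ?thesis unfolding order_def by (simp add: nat_pow_def)
qed

lemma D_kill:
  assumes sub: "\<And>c. c \<in> A \<Longrightarrow> subgroup (Hc c) G"
    and M: "\<And>p a. Factorial_Ring.prime p \<Longrightarrow> p ^ a dvd n \<Longrightarrow> a \<le> M"
  shows "c \<in> A \<Longrightarrow> (D ^^ Suc M) c = \<one>"
proof -
  have main: "\<And>c. c \<in> A \<Longrightarrow> c [^] N = \<one> \<Longrightarrow> 0 < N \<Longrightarrow> (D ^^ Suc M) c = \<one>" for N :: nat
  proof (induction N rule: less_induct)
    case (less N c)
    note c = less.prems(1) and e = less.prems(2) and N0 = less.prems(3)
    have cc: "c \<in> carrier G" using AC[OF c] .
    show ?case
    proof (cases "\<exists>p k. Factorial_Ring.prime p \<and> N = p ^ k")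
      case True
      then obtain p k where pk: "Factorial_Ring.prime p" "N = p ^ k" by blast
      have ek: "c [^] (p ^ k) = \<one>" using e pk(2) by simp
      show ?thesis by (rule D_kill_pp[OF c sub pk(1) ek M[OF pk(1)]])
    next
      case False
      have N1: "N \<noteq> 1"
      proof
        assume "N = 1"
        then have "N = 2 ^ 0" by simp
        then have "\<exists>p k. Factorial_Ring.prime p \<and> N = p ^ k" using two_is_prime_nat by blast
        then show False using False by simp
      qed
      then obtain p where p: "Factorial_Ring.prime p" "p dvd N" using prime_factor_nat by blast
      define u where "u = p ^ multiplicity p N"
      have N00: "N \<noteq> 0" using N0 by simp
      have pu: "\<not> is_unit p"
      proof
        assume "is_unit p"
        from not_prime_unit[OF this] p(1) show False by simp
      qed
      obtain v where v: "N = u * v" "\<not> p dvd v"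
        unfolding u_def by (rule multiplicity_decompose'[OF N00 pu])
      have mp: "multiplicity p N > 0" using p N0 by (simp add: prime_multiplicity_gt_zero_iff)
      have u1: "u > 1" unfolding u_def by (rule one_less_power[OF prime_gt_1_nat[OF p(1)] mp])
      have v1: "v > 1"
      proof -
        have "v \<noteq> 0" using v N0 by auto
        moreover have "v \<noteq> 1"
        proof
          assume "v = 1"
          then have "N = p ^ multiplicity p N" using v unfolding u_def by simp
          then have "\<exists>p k. Factorial_Ring.prime p \<and> N = p ^ k" using p(1) by blast
          then show False using False by simp
        qed
        ultimately show ?thesis by simp
      qed
      have cop: "coprime u v" unfolding u_def using prime_imp_coprime[OF p(1) v(2)] by simp
      have uN: "u < N" "v < N" using v u1 v1 by simp_all
      have cu: "c [^] u \<in> A" "c [^] v \<in> A" using subgroup_nat_pow[OF subA c] by auto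
      have "(c [^] u) [^] v = \<one>" using e v cc by (simp add: nat_pow_pow)
      then have ku: "(D ^^ Suc M) (c [^] u) = \<one>" using less.IH[OF uN(2) cu(1)] v1 by simp
      have "(c [^] v) [^] u = \<one>" using e v cc by (simp add: nat_pow_pow mult.commute)
      then have kv: "(D ^^ Suc M) (c [^] v) = \<one>" using less.IH[OF uN(1) cu(2)] u1 by simp
      have K: "subgroup (Nr (Suc M)) G" by (rule Nr_subgroup)
      have inu: "c [^] u \<in> Nr (Suc M)" "c [^] v \<in> Nr (Suc M)" using cu ku kv unfolding Nr_def by auto
      obtain x y where xy: "u * x = v * y + gcd u v" using bezout_nat[of u v] u1 by auto
      then have xy1: "u * x = v * y + 1" using cop by simp
      have xy2: "u * x = Suc (v * y)" using xy1 by simp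
      have e2: "c [^] (u * x) = c [^] (v * y) \<otimes> c" unfolding xy2 by (rule nat_pow_Suc)
      have "inv (c [^] (v * y)) \<otimes> c [^] (u * x) = inv (c [^] (v * y)) \<otimes> (c [^] (v * y) \<otimes> c)"
        using e2 by simp
      also have "\<dots> = c" by (rule canc2) (use cc in simp_all)
      finally have e3: "c = inv (c [^] (v * y)) \<otimes> c [^] (u * x)" by (rule sym)
      have e4: "c [^] (v * y) = (c [^] v) [^] y" "c [^] (u * x) = (c [^] u) [^] x"
        using cc by (simp_all add: nat_pow_pow)
      have ceq: "c = inv ((c [^] v) [^] y) \<otimes> (c [^] u) [^] x" using e3 unfolding e4 .
      have X: "inv ((c [^] v) [^] y) \<otimes> (c [^] u) [^] x \<in> Nr (Suc M)"
        by (intro subgroup.m_closed[OF K] subgroup.m_inv_closed[OF K] subgroup_nat_pow[OF K] inu)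
      have "c \<in> Nr (Suc M)" by (subst ceq) (rule X)
      then show ?thesis unfolding Nr_def by simp
    qed
  qed
  assume c: "c \<in> A"
  have "0 < card A" using c finA card_gt_0_iff by blast
  then show ?thesis using main[OF c A_exp[OF c]] by simp
qed

end


lemma (in group) conj_auto:
  assumes c: "c \<in> carrier G"
  shows "(\<lambda>z\<in>carrier G. c \<otimes> z \<otimes> inv c) \<in> auto G"
proof -
  have hom: "(\<lambda>z\<in>carrier G. c \<otimes> z \<otimes> inv c) \<in> hom G G"
  proof (rule homI)
    fix x assume "x \<in> carrier G" then show "(\<lambda>z\<in>carrier G. c \<otimes> z \<otimes> inv c) x \<in> carrier G" using c by simp
  next
    fix x y assume xy: "x \<in> carrier G" "y \<in> carrier G"
    then show "(\<lambda>z\<in>carrier G. c \<otimes> z \<otimes> inv c) (x \<otimes> y) =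
      (\<lambda>z\<in>carrier G. c \<otimes> z \<otimes> inv c) x \<otimes> (\<lambda>z\<in>carrier G. c \<otimes> z \<otimes> inv c) y"
      using c by (simp add: m_assoc)
  qed
  have "bij_betw (\<lambda>z\<in>carrier G. c \<otimes> z \<otimes> inv c) (carrier G) (carrier G)"
  proof (rule bij_betwI[where g = "\<lambda>z\<in>carrier G. inv c \<otimes> z \<otimes> c"])
    show "(\<lambda>z\<in>carrier G. c \<otimes> z \<otimes> inv c) \<in> carrier G \<rightarrow> carrier G" using c by auto
    show "(\<lambda>z\<in>carrier G. inv c \<otimes> z \<otimes> c) \<in> carrier G \<rightarrow> carrier G" using c by auto
    fix x assume x: "x \<in> carrier G"
    show "(\<lambda>z\<in>carrier G. inv c \<otimes> z \<otimes> c) ((\<lambda>z\<in>carrier G. c \<otimes> z \<otimes> inv c) x) = x"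
      using c x by (simp add: m_assoc)
    show "(\<lambda>z\<in>carrier G. c \<otimes> z \<otimes> inv c) ((\<lambda>z\<in>carrier G. inv c \<otimes> z \<otimes> c) x) = x"
      using c x by (simp add: m_assoc)
  qed
  then have "(\<lambda>z\<in>carrier G. c \<otimes> z \<otimes> inv c) \<in> Bij (carrier G)" unfolding Bij_def by simp
  then show ?thesis using hom unfolding auto_def by simp
qed

context nilsetup begin

lemma twisted_conj:
  assumes c: "c \<in> A"
  shows "twisted_class G (\<lambda>z\<in>carrier G. c \<otimes> z \<otimes> inv c) = Hc c"
proof
  have cc: "c \<in> carrier G" using AC[OF c] .
  show "twisted_class G (\<lambda>z\<in>carrier G. c \<otimes> z \<otimes> inv c) \<subseteq> Hc c"
  proof
    fix w assume "w \<in> twisted_class G (\<lambda>z\<in>carrier G. c \<otimes> z \<otimes> inv c)"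
    then obtain z where z: "z \<in> carrier G" "w = inv z \<otimes> (c \<otimes> z \<otimes> inv c)"
      unfolding twisted_class_def by auto
    obtain a i where a: "a \<in> A" "z = a \<otimes> g [^] (i::nat)" using gen[OF z(1)] by blast
    have ac: "a \<in> carrier G" using AC[OF a(1)] .
    have "w = inv (g [^] i) \<otimes> (inv a \<otimes> (c \<otimes> a)) \<otimes> g [^] i \<otimes> inv c"
      unfolding z(2) a(2) using ac cc gG by (simp add: m_assoc inv_mult_group)
    also have "\<dots> = T i c \<otimes> inv c" unfolding T_def using comm[OF c a(1)] ac cc by simp
    finally show "w \<in> Hc c" using Hc_elemI by simp
  qed
  show "Hc c \<subseteq> twisted_class G (\<lambda>z\<in>carrier G. c \<otimes> z \<otimes> inv c)"
  proof
    fix w assume "w \<in> Hc c"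
    then obtain i where i: "w = T i c \<otimes> inv c" using Hc_elem by blast
    have "w = inv (g [^] i) \<otimes> (\<lambda>z\<in>carrier G. c \<otimes> z \<otimes> inv c) (g [^] i)"
      unfolding i T_def using gG cc by (simp add: m_assoc)
    then show "w \<in> twisted_class G (\<lambda>z\<in>carrier G. c \<otimes> z \<otimes> inv c)"
      unfolding twisted_class_def using gG by blast
  qed
qed

end

lemma (in group) main_group:
  assumes "n > 1"
    and "A \<lhd> G"
    and "finite A"
    and "comm_group (G\<lparr>carrier := A\<rparr>)"
    and "G Mod A \<cong> integer_mod_group n"
    and "\<forall>\<phi> \<in> auto G. subgroup (twisted_class G \<phi>) G"
  shows "nilpotent_class_le G (Max {multiplicity p n | p. p \<in> prime_factors n} + 1)"
proof -
  obtain g where g: "g \<in> carrier G" "g [^] n \<in> A" "\<forall>x\<in>carrier G. \<exists>a\<in>A. \<exists>i::nat. x = a \<otimes> g [^] i"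
    using cyclic_quotient_setup[OF assms(2) assms(1) assms(5)] by blast
  have subA: "subgroup A G" using assms(2) by (rule normal_imp_subgroup)
  have comm: "x \<otimes> y = y \<otimes> x" if "x \<in> A" "y \<in> A" for x y
    using comm_monoid.m_comm[OF comm_group.axioms(1)[OF assms(4)], of x y] that by simp
  have ns: "nilsetup G A g n"
    unfolding nilsetup_def nilsetup_axioms_def using is_group assms(1,2,3) g comm by auto
  interpret N: nilsetup G A g n by (rule ns)
  have twist: "subgroup (N.Hc c) G" if c: "c \<in> A" for c
  proof -
    have "(\<lambda>z\<in>carrier G. c \<otimes> z \<otimes> inv c) \<in> auto G" by (rule conj_auto[OF N.AC[OF c]])
    then have "subgroup (twisted_class G (\<lambda>z\<in>carrier G. c \<otimes> z \<otimes> inv c)) G" using assms(6) by blast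
    then show ?thesis using N.twisted_conj[OF c] by simp
  qed
  define M where "M = Max {multiplicity p n | p. p \<in> prime_factors n}"
  have finM: "finite {multiplicity p n | p. p \<in> prime_factors n}"
  proof -
    have "{multiplicity p n | p. p \<in> prime_factors n} = (\<lambda>p. multiplicity p n) ` prime_factors n" by auto
    then show ?thesis by simp
  qed
  have Mprop: "a \<le> M" if p: "Factorial_Ring.prime p" and d: "p ^ a dvd n" for p a
  proof (cases "a = 0")
    case True then show ?thesis by simp
  next
    case False
    then have "p dvd n" using d by (meson dvd_power dvd_trans not_gr0)
    then have pf: "p \<in> prime_factors n" using p assms(1) by (simp add: in_prime_factors_iff)
    have n0: "n \<noteq> 0" using assms(1) by simp
    have pu: "\<not> is_unit p"
    proof
      assume "is_unit p"
      from not_prime_unit[OF this] p show False by simp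
    qed
    have "a \<le> multiplicity p n" by (rule multiplicity_geI[OF n0 pu d])
    also have "\<dots> \<le> M" unfolding M_def using pf finM by (intro Max_ge) auto
    finally show ?thesis .
  qed
  have "lower_central G (Suc M) = {\<one>}"
    by (rule N.lower_central_trivial[OF N.D_kill[OF twist Mprop]])
  then show ?thesis unfolding nilpotent_class_le_def M_def by simp
qed

theorem mainTheorem13:
  fixes G :: "('a, 'b) monoid_scheme" and A :: "'a set" and n :: nat
  assumes "group G"
    and "n > 1" and "odd n"
    and "A \<lhd> G"
    and "finite A"
    and "comm_group (G\<lparr>carrier := A\<rparr>)"
    and "G Mod A \<cong> integer_mod_group n"
    and "\<forall>\<phi> \<in> auto G. subgroup (twisted_class G \<phi>) G"
  shows "nilpotent_class_le G (Max {multiplicity p n | p. p \<in> prime_factors n} + 1)"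
  by (rule group.main_group[OF assms(1,2,4,5,6,7,8)])


end
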